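(* Fix an integer $\alpha\ge2$, an integer $\Delta\ge3$, and parameters $\beta_\mu>\beta_\nu\ge\frac{\Delta-2}{\Delta}$ with $\beta:=(\beta_\nu/\beta_\mu)^\alpha\beta_\mu<\frac{\Delta-2}{\Delta}$. There is a constant $C=C(\Delta,\alpha,\beta_\nu,\beta_\mu)>0$ such that for every $\Delta$-regular graph $G$, letting $\nu$ and $\mu$ be the Gibbs distributions of $(G,\beta_\nu)$ and $(G,\beta_\mu)$ respectively, $$\frac1C\,Z(G,\beta)\ \le\ D_{\chi^\alpha}(\nu\|\mu)\cdot\frac{Z(G,\beta_\nu)^\alpha}{Z(G,\beta_\mu)^{\alpha-1}}\ \le\ C\,Z(G,\beta).$$
   Context: For a graph $G=(V,E)$ and $\gamma>0$, the Ising model $(G,\gamma)$ has Gibbs distribution on $\{-1,+1\}^V$ given by $\pi(\sigma)=\gamma^{m(\sigma)}/Z(G,\gamma)$, where $m(\sigma)=|\{\{u,v\}\in E:\sigma_u=\sigma_v\}|$ and $Z(G,\gamma)=\sum_{\sigma\in\{-1,+1\}^V}\gamma^{m(\sigma)}$ is its partition function. The $\chi^\alpha$-divergence is $D_{\chi^\alpha}(\nu\|\mu)=\sum_\sigma\mu(\sigma)\cdot\frac12\left|\frac{\nu(\sigma)}{\mu(\sigma)}-1\right|^\alpha$. *)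

theory Defs
  imports "HOL-Library.FuncSet" Complex_Main
begin

definition simple_graph :: "nat set \<Rightarrow> nat set set \<Rightarrow> bool" where
  "simple_graph V E \<longleftrightarrow> finite V \<and> (\<forall>e\<in>E. e \<subseteq> V \<and> card e = 2)"

definition regular_graph :: "nat \<Rightarrow> nat set \<Rightarrow> nat set set \<Rightarrow> bool" where
  "regular_graph d V E \<longleftrightarrow> simple_graph V E \<and> (\<forall>v\<in>V. card {e\<in>E. v \<in> e} = d)"

definition spins :: "nat set \<Rightarrow> (nat \<Rightarrow> int) set" where
  "spins V = V \<rightarrow>\<^sub>E {-1, 1}"

definition mono_edges :: "nat set set \<Rightarrow> (nat \<Rightarrow> int) \<Rightarrow> nat" where
  "mono_edges E \<sigma> = card {e\<in>E. \<exists>u v. e = {u, v} \<and> \<sigma> u = \<sigma> v}"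

definition ising_Z :: "nat set \<Rightarrow> nat set set \<Rightarrow> real \<Rightarrow> real" where
  "ising_Z V E \<gamma> = (\<Sum>\<sigma>\<in>spins V. \<gamma> ^ mono_edges E \<sigma>)"

definition gibbs :: "nat set \<Rightarrow> nat set set \<Rightarrow> real \<Rightarrow> (nat \<Rightarrow> int) \<Rightarrow> real" where
  "gibbs V E \<gamma> \<sigma> = \<gamma> ^ mono_edges E \<sigma> / ising_Z V E \<gamma>"

definition chi_div :: "nat \<Rightarrow> ('s \<Rightarrow> real) \<Rightarrow> ('s \<Rightarrow> real) \<Rightarrow> 's set \<Rightarrow> real" where
  "chi_div \<alpha> \<nu> \<mu> \<Omega> = (\<Sum>\<sigma>\<in>\<Omega>. \<mu> \<sigma> * (1/2) * \<bar>\<nu> \<sigma> / \<mu> \<sigma> - 1\<bar> ^ \<alpha>)"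

end

theory Submission
  imports Defs "HOL-Analysis.Convex"
begin

lemma convex_pow_nonneg: "convex_on {0::real..} (\<lambda>x. x^n)"
  by (cases "even n") (auto intro: convex_on_subset[OF convex_power_even] convex_power_odd)

lemma jensen_pow:
  fixes p X :: "'s \<Rightarrow> real"
  assumes "finite S" "S \<noteq> {}" "sum p S = 1" "\<And>i. i\<in>S \<Longrightarrow> p i \<ge> 0" "\<And>i. i\<in>S \<Longrightarrow> X i \<ge> 0"
  shows "(\<Sum>i\<in>S. p i * X i) ^ n \<le> (\<Sum>i\<in>S. p i * X i ^ n)"
  using convex_on_sum[OF assms(1,2) convex_pow_nonneg assms(3,4), of X n] assms(5) by simp

lemma Q_eq:
  fixes m :: "'s \<Rightarrow> nat" and a b :: real
  assumes "a > 0" "b > 0" "\<alpha> \<ge> 1"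
    and Za: "Za = (\<Sum>\<sigma>\<in>S. a ^ m \<sigma>)" and Zb: "Zb = (\<Sum>\<sigma>\<in>S. b ^ m \<sigma>)"
    and "Za > 0" "Zb > 0"
  shows "chi_div \<alpha> (\<lambda>\<sigma>. a ^ m \<sigma> / Za) (\<lambda>\<sigma>. b ^ m \<sigma> / Zb) S * Za ^ \<alpha> / Zb ^ (\<alpha> - 1)
     = (1/2) * (\<Sum>\<sigma>\<in>S. b ^ m \<sigma> * \<bar>(a/b) ^ m \<sigma> - Za/Zb\<bar> ^ \<alpha>)"
proof -
  have tm: "b ^ k / Zb * (1/2) * \<bar>a ^ k / Za / (b ^ k / Zb) - 1\<bar> ^ \<alpha> * Za ^ \<alpha> / Zb ^ (\<alpha> - 1)
     = (1/2) * (b ^ k * \<bar>(a/b) ^ k - Za/Zb\<bar> ^ \<alpha>)" for k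
  proof -
    have bk: "b ^ k > 0" using assms by simp
    have e1: "a ^ k / Za / (b ^ k / Zb) - 1 = (Zb/Za) * ((a/b) ^ k - Za/Zb)"
      using bk assms(1,2,6,7) by (simp add: field_simps power_divide)
    have e2: "\<bar>a ^ k / Za / (b ^ k / Zb) - 1\<bar> ^ \<alpha> = (Zb/Za) ^ \<alpha> * \<bar>(a/b) ^ k - Za/Zb\<bar> ^ \<alpha>"
      unfolding e1 abs_mult power_mult_distrib using assms(6,7) by simp
    have e3: "(Zb/Za) ^ \<alpha> * Za ^ \<alpha> = Zb ^ \<alpha>"
      using assms(6,7) by (simp add: power_divide)
    have e4: "Zb ^ \<alpha> = Zb * Zb ^ (\<alpha> - 1)"
      using assms(3) by (metis Suc_diff_1 less_le_trans zero_less_one power_Suc)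
    show ?thesis unfolding e2
      using assms(6,7) bk e3 e4 by (simp add: field_simps)
  qed
  show ?thesis unfolding chi_div_def sum_distrib_right sum_distrib_left sum_divide_distrib
    by (rule sum.cong[OF refl]) (rule tm)
qed

lemma pow_combine: "b \<noteq> 0 \<Longrightarrow> b ^ k * ((a/b) ^ k) ^ n = ((a/b) ^ n * b) ^ k" for a b :: real
  by (simp add: power_mult_distrib power_mult[symmetric] mult.commute)

lemma pow_swap: "(x ^ i) ^ j = (x ^ j) ^ i" for x :: real
  by (metis power_mult mult.commute)

lemma abs_diff_pow_le:
  fixes X t :: real assumes "X \<ge> 0" "t \<ge> 0"
  shows "\<bar>X - t\<bar> ^ n \<le> X ^ n + t ^ n"
proof -
  have "\<bar>X - t\<bar> \<le> max X t" using assms by auto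
  hence "\<bar>X - t\<bar> ^ n \<le> (max X t) ^ n" by (rule power_mono) simp
  also have "\<dots> \<le> X ^ n + t ^ n" using assms by (cases "X \<le> t") (auto simp: max_def)
  finally show ?thesis .
qed

lemma upper:
  fixes m :: "'s \<Rightarrow> nat" and a b :: real
  assumes S: "finite S" "S \<noteq> {}" and ab: "a > 0" "b > 0"
    and Za: "Za = (\<Sum>\<sigma>\<in>S. a ^ m \<sigma>)" and Zb: "Zb = (\<Sum>\<sigma>\<in>S. b ^ m \<sigma>)"
  shows "(1/2) * (\<Sum>\<sigma>\<in>S. b ^ m \<sigma> * \<bar>(a/b) ^ m \<sigma> - Za/Zb\<bar> ^ \<alpha>)
     \<le> (\<Sum>\<sigma>\<in>S. ((a/b) ^ \<alpha> * b) ^ m \<sigma>)"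
proof -
  define t where "t = Za / Zb"
  define Zg where "Zg = (\<Sum>\<sigma>\<in>S. ((a/b) ^ \<alpha> * b) ^ m \<sigma>)"
  have Zbpos: "Zb > 0" unfolding Zb using S ab by (intro sum_pos) auto
  have Zapos: "Za > 0" unfolding Za using S ab by (intro sum_pos) auto
  have tpos: "t \<ge> 0" unfolding t_def using Zbpos Zapos by simp
  have "(\<Sum>\<sigma>\<in>S. b ^ m \<sigma> * \<bar>(a/b) ^ m \<sigma> - t\<bar> ^ \<alpha>)
      \<le> (\<Sum>\<sigma>\<in>S. b ^ m \<sigma> * (((a/b) ^ m \<sigma>) ^ \<alpha> + t ^ \<alpha>))"
    using ab tpos by (intro sum_mono mult_left_mono abs_diff_pow_le) auto
  also have "\<dots> = Zg + t ^ \<alpha> * Zb"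
    unfolding Zg_def Zb distrib_left sum.distrib sum_distrib_left
    using ab by (simp add: pow_combine mult.commute)
  also have "t ^ \<alpha> * Zb \<le> Zg"
  proof -
    have t_eq: "t = (\<Sum>\<sigma>\<in>S. (b ^ m \<sigma> / Zb) * (a/b) ^ m \<sigma>)"
      unfolding t_def Za sum_divide_distrib
      using ab by (intro sum.cong refl) (simp add: power_divide)
    have "t ^ \<alpha> \<le> (\<Sum>\<sigma>\<in>S. (b ^ m \<sigma> / Zb) * ((a/b) ^ m \<sigma>) ^ \<alpha>)"
      unfolding t_eq
    proof (rule jensen_pow[OF S])
      show "(\<Sum>\<sigma>\<in>S. b ^ m \<sigma> / Zb) = 1" unfolding sum_divide_distrib[symmetric] Zb[symmetric] using Zbpos by simp
    qed (use ab Zbpos in auto)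
    also have "\<dots> = Zg / Zb"
      unfolding Zg_def sum_divide_distrib using ab by (intro sum.cong refl) (simp add: pow_combine[symmetric])
    finally show ?thesis using Zbpos by (simp add: field_simps)
  qed
  finally show ?thesis unfolding t_def Zg_def by simp
qed

lemma select:
  fixes r t :: real
  assumes "0 < r" "r < 1"
  shows "\<exists>x::nat. \<forall>n. n \<noteq> x \<longrightarrow> (1-r)/(1+r) * r ^ n \<le> \<bar>r ^ n - t\<bar>"
proof -
  define \<delta> where "\<delta> = (1-r)/(1+r)"
  have d: "\<delta> * (1 + r) = 1 - r" unfolding \<delta>_def using assms by simp
  have uniq: "n = k" if n: "\<bar>r ^ n - t\<bar> < \<delta> * r ^ n" and k: "\<bar>r ^ k - t\<bar> < \<delta> * r ^ k" for n k
  proof (rule ccontr)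
    assume "n \<noteq> k"
    have main: False if "i < j" "\<bar>r ^ i - t\<bar> < \<delta> * r ^ i" "\<bar>r ^ j - t\<bar> < \<delta> * r ^ j" for i j
    proof -
      have "r ^ j \<le> r ^ Suc i" using assms that(1) by (intro power_decreasing) auto
      hence rj: "r ^ j \<le> r * r ^ i" by simp
      have ri: "r ^ i > 0" using assms by simp
      have "(1 - \<delta>) * r ^ i < t" using that(2) by (auto simp: abs_less_iff algebra_simps)
      moreover have "t < (1 + \<delta>) * r ^ j" using that(3) by (auto simp: abs_less_iff algebra_simps)
      moreover have "\<delta> \<ge> 0" unfolding \<delta>_def using assms by simp
      hence "(1 + \<delta>) * r ^ j \<le> (1 + \<delta>) * (r * r ^ i)" using rj by (intro mult_left_mono) auto
      ultimately have "(1 - \<delta>) * r ^ i < (1 + \<delta>) * r * r ^ i" by (simp add: mult.assoc)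
      hence "1 - \<delta> < (1 + \<delta>) * r" using ri by simp
      thus False using d by (simp add: algebra_simps)
    qed
    show False using \<open>n \<noteq> k\<close> main[OF _ n k] main[OF _ k n] by linarith
  qed
  show ?thesis
  proof (cases "\<exists>n. \<bar>r ^ n - t\<bar> < \<delta> * r ^ n")
    case True
    then obtain x where x: "\<bar>r ^ x - t\<bar> < \<delta> * r ^ x" by blast
    show ?thesis unfolding \<delta>_def[symmetric]
      using uniq[OF _ x] by (intro exI[of _ x]) (auto simp: not_less[symmetric])
  next
    case False
    thus ?thesis unfolding \<delta>_def[symmetric] by (auto simp: not_less)
  qed
qed

lemma lower:
  fixes m :: "'s \<Rightarrow> nat" and a b \<delta> t :: real
  assumes "b > 0" "\<delta> \<ge> 0" and ha: "a \<ge> 0" and fin: "finite S"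
    and H: "\<And>\<sigma>. \<sigma> \<in> S \<Longrightarrow> m \<sigma> \<noteq> x \<Longrightarrow> \<delta> * (a/b) ^ m \<sigma> \<le> \<bar>(a/b) ^ m \<sigma> - t\<bar>"
  shows "\<delta> ^ \<alpha> * (\<Sum>\<sigma>\<in>{\<sigma>\<in>S. m \<sigma> \<noteq> x}. ((a/b) ^ \<alpha> * b) ^ m \<sigma>)
     \<le> (\<Sum>\<sigma>\<in>S. b ^ m \<sigma> * \<bar>(a/b) ^ m \<sigma> - t\<bar> ^ \<alpha>)"
proof -
  have "\<delta> ^ \<alpha> * (\<Sum>\<sigma>\<in>{\<sigma>\<in>S. m \<sigma> \<noteq> x}. ((a/b) ^ \<alpha> * b) ^ m \<sigma>)
     = (\<Sum>\<sigma>\<in>S. if m \<sigma> \<noteq> x then b ^ m \<sigma> * (\<delta> * (a/b) ^ m \<sigma>) ^ \<alpha> else 0)"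
    unfolding sum_distrib_left sum.inter_filter[OF fin]
    using assms(1) by (intro sum.cong refl) (simp add: pow_combine[symmetric] power_mult_distrib pow_swap)
  also have "\<dots> \<le> (\<Sum>\<sigma>\<in>S. b ^ m \<sigma> * \<bar>(a/b) ^ m \<sigma> - t\<bar> ^ \<alpha>)"
  proof (rule sum_mono)
    fix \<sigma> assume s: "\<sigma> \<in> S"
    show "(if m \<sigma> \<noteq> x then b ^ m \<sigma> * (\<delta> * (a/b) ^ m \<sigma>) ^ \<alpha> else 0) \<le> b ^ m \<sigma> * \<bar>(a/b) ^ m \<sigma> - t\<bar> ^ \<alpha>"
    proof (cases "m \<sigma> \<noteq> x")
      case True
      have "0 \<le> \<delta> * (a/b) ^ m \<sigma>" using assms(1,2) ha by simp
      hence "(\<delta> * (a/b) ^ m \<sigma>) ^ \<alpha> \<le> \<bar>(a/b) ^ m \<sigma> - t\<bar> ^ \<alpha>"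
        using H[OF s True] by (intro power_mono) auto
      thus ?thesis using True assms(1) by (simp add: mult_left_mono)
    qed (use assms(1) in simp)
  qed
  finally show ?thesis .
qed


definition fl :: "nat \<Rightarrow> (nat \<Rightarrow> int) \<Rightarrow> (nat \<Rightarrow> int)" where
  "fl w \<sigma> = \<sigma>(w := - \<sigma> w)"

definition ismono :: "nat set \<Rightarrow> (nat \<Rightarrow> int) \<Rightarrow> bool" where
  "ismono e \<sigma> \<longleftrightarrow> (\<exists>u v. e = {u, v} \<and> \<sigma> u = \<sigma> v)"

lemma fl_fl[simp]: "fl w (fl w \<sigma>) = \<sigma>"
  by (auto simp: fl_def fun_eq_iff)

lemma fl_spins: "w \<in> V \<Longrightarrow> \<sigma> \<in> spins V \<Longrightarrow> fl w \<sigma> \<in> spins V"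
  unfolding spins_def fl_def by (auto simp: PiE_iff extensional_def)

lemma ismono_cong: "(\<And>z. z \<in> e \<Longrightarrow> \<sigma> z = \<tau> z) \<Longrightarrow> ismono e \<sigma> = ismono e \<tau>"
  unfolding ismono_def by (smt (verit) insert_iff)

lemma ismono_fl_out: "w \<notin> e \<Longrightarrow> ismono e (fl w \<sigma>) = ismono e \<sigma>"
  by (rule ismono_cong) (auto simp: fl_def)

lemma ismono_pair: "u \<noteq> v \<Longrightarrow> ismono {u, v} \<sigma> \<longleftrightarrow> \<sigma> u = \<sigma> v"
  unfolding ismono_def by (auto simp: doubleton_eq_iff)

lemma m_sum: "finite E \<Longrightarrow> real (mono_edges E \<sigma>) = (\<Sum>e\<in>E. if ismono e \<sigma> then 1 else 0)"
proof -
  assume fin: "finite E"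
  have "mono_edges E \<sigma> = card {e\<in>E. ismono e \<sigma>}" unfolding mono_edges_def ismono_def by simp
  also have "real \<dots> = (\<Sum>e\<in>{e\<in>E. ismono e \<sigma>}. 1)" by simp
  also have "\<dots> = (\<Sum>e\<in>E. if ismono e \<sigma> then 1 else 0)" by (rule sum.inter_filter[OF fin])
  finally show ?thesis .
qed

lemma fl_bound:
  assumes fin: "finite E"
  shows "mono_edges E (fl w \<sigma>) \<le> mono_edges E \<sigma> + card {e\<in>E. w \<in> e}"
proof -
  let ?I = "\<lambda>\<tau> e. if ismono e \<tau> then 1 else (0::real)"
  have "real (mono_edges E (fl w \<sigma>)) - real (mono_edges E \<sigma>) = (\<Sum>e\<in>E. ?I (fl w \<sigma>) e - ?I \<sigma> e)"
    unfolding m_sum[OF fin] sum_subtractf by simp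
  also have "\<dots> = (\<Sum>e\<in>E. if w \<in> e then ?I (fl w \<sigma>) e - ?I \<sigma> e else 0)"
    by (intro sum.cong refl) (auto simp: ismono_fl_out)
  also have "\<dots> = (\<Sum>e\<in>{e\<in>E. w \<in> e}. ?I (fl w \<sigma>) e - ?I \<sigma> e)"
    by (rule sum.inter_filter[OF fin, symmetric])
  also have "\<dots> \<le> (\<Sum>e\<in>{e\<in>E. w \<in> e}. 1)" by (intro sum_mono) auto
  finally show ?thesis by simp
qed

lemma second_diff:
  assumes fin: "finite E" and uv: "u \<noteq> v" "{u, v} \<in> E"
    and E2: "\<And>e. e \<in> E \<Longrightarrow> card e = 2"
    and su: "\<sigma> u \<in> {-1, 1}" and sv: "\<sigma> v \<in> {-1, 1}"
  shows "real (mono_edges E (fl u (fl v \<sigma>))) + real (mono_edges E \<sigma>)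
          - real (mono_edges E (fl u \<sigma>)) - real (mono_edges E (fl v \<sigma>)) \<noteq> 0"
proof -
  let ?I = "\<lambda>\<tau> e. if ismono e \<tau> then 1 else (0::real)"
  define h where "h e = ?I (fl u (fl v \<sigma>)) e + ?I \<sigma> e - ?I (fl u \<sigma>) e - ?I (fl v \<sigma>) e" for e
  have lhs: "real (mono_edges E (fl u (fl v \<sigma>))) + real (mono_edges E \<sigma>)
          - real (mono_edges E (fl u \<sigma>)) - real (mono_edges E (fl v \<sigma>)) = (\<Sum>e\<in>E. h e)"
    unfolding m_sum[OF fin] h_def sum.distrib sum_subtractf by simp
  have h0: "h e = 0" if e: "e \<in> E" "e \<noteq> {u, v}" for e
  proof -
    have "\<not> (u \<in> e \<and> v \<in> e)"
    proof
      assume "u \<in> e \<and> v \<in> e"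
      hence "{u, v} \<subseteq> e" by auto
      moreover have "card {u, v} = card e" using E2[OF e(1)] uv by simp
      moreover have "finite e" using E2[OF e(1)] card_ge_0_finite by force
      ultimately have "{u, v} = e" by (intro card_subset_eq)
      thus False using e by simp
    qed
    moreover have "h e = 0" if "u \<notin> e"
      unfolding h_def using that by (simp add: ismono_fl_out)
    moreover have "h e = 0" if "v \<notin> e"
    proof -
      have "ismono e (fl u (fl v \<sigma>)) = ismono e (fl u \<sigma>)"
        by (rule ismono_cong) (use that uv in \<open>auto simp: fl_def\<close>)
      thus ?thesis unfolding h_def using that by (simp add: ismono_fl_out)
    qed
    ultimately show ?thesis by blast
  qed
  have "(\<Sum>e\<in>E. h e) = (\<Sum>e\<in>E. if e = {u, v} then h {u, v} else 0)"
    by (intro sum.cong refl) (auto simp: h0)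
  also have "\<dots> = h {u, v}" using uv fin by simp
  finally have "(\<Sum>e\<in>E. h e) = h {u, v}" .
  moreover have "h {u, v} \<noteq> 0"
    unfolding h_def using uv su sv by (auto simp: ismono_pair fl_def)
  ultimately show ?thesis using lhs by simp
qed

lemma sum_inj_bound:
  fixes w :: "'a \<Rightarrow> real"
  assumes "finite T" "finite B" "inj_on h B" "h ` B \<subseteq> T"
    "\<And>\<sigma>. \<sigma> \<in> B \<Longrightarrow> c * w \<sigma> \<le> w (h \<sigma>)" "\<And>\<sigma>. \<sigma> \<in> T \<Longrightarrow> w \<sigma> \<ge> 0"
  shows "c * sum w B \<le> sum w T"
proof -
  have "c * sum w B \<le> (\<Sum>\<sigma>\<in>B. w (h \<sigma>))"
    unfolding sum_distrib_left by (intro sum_mono assms(5))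
  also have "\<dots> = sum w (h ` B)" using sum.reindex[OF assms(3), of w] by simp
  also have "\<dots> \<le> sum w T" using assms by (intro sum_mono2) auto
  finally show ?thesis .
qed

lemma sum_Un3_le:
  fixes w :: "'a \<Rightarrow> real"
  assumes "finite B1" "finite B2" "finite B3" "\<And>\<sigma>. w \<sigma> \<ge> 0"
  shows "sum w (B1 \<union> B2 \<union> B3) \<le> sum w B1 + sum w B2 + sum w B3"
proof -
  have "sum w (B1 \<union> B2 \<union> B3) \<le> sum w (B1 \<union> B2) + sum w B3"
    using sum_Un[of "B1 \<union> B2" B3 w] assms sum_nonneg[of "(B1 \<union> B2) \<inter> B3" w] by simp
  also have "sum w (B1 \<union> B2) \<le> sum w B1 + sum w B2"
    using sum_Un[of B1 B2 w] assms sum_nonneg[of "B1 \<inter> B2" w] by simp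
  finally show ?thesis by simp
qed

lemma comb:
  fixes g :: real
  assumes reg: "regular_graph \<Delta> V E" and ne: "V \<noteq> {}" and D: "\<Delta> > 0" and g: "0 < g" "g < 1"
  shows "(\<Sum>\<sigma>\<in>spins V. g ^ mono_edges E \<sigma>)
     \<le> (1 + 3 / g ^ (2 * \<Delta>)) * (\<Sum>\<sigma>\<in>{\<sigma>\<in>spins V. mono_edges E \<sigma> \<noteq> x}. g ^ mono_edges E \<sigma>)"
proof -
  let ?M = "mono_edges E"
  define w where "w \<sigma> = g ^ ?M \<sigma>" for \<sigma>
  define c where "c = g ^ (2 * \<Delta>)"
  define S where "S = spins V"
  have finV: "finite V" and E2: "\<And>e. e \<in> E \<Longrightarrow> card e = 2" and EV: "\<And>e. e \<in> E \<Longrightarrow> e \<subseteq> V"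
    and deg: "\<And>v. v \<in> V \<Longrightarrow> card {e\<in>E. v \<in> e} = \<Delta>"
    using reg unfolding regular_graph_def simple_graph_def by auto
  have finE: "finite E"
    using finV EV by (meson PowI finite_Pow_iff finite_subset subsetI)
  obtain v where v: "v \<in> V" using ne by blast
  have "{e\<in>E. v \<in> e} \<noteq> {}" 
  proof
    assume "{e\<in>E. v \<in> e} = {}"
    hence "card {e\<in>E. v \<in> e} = 0" by (simp only: card.empty)
    thus False using deg[OF v] D by simp
  qed
  then obtain e where e: "e \<in> E" "v \<in> e" by blast
  obtain a b where ab: "e = {a, b}" "a \<noteq> b" using E2[OF e(1)] by (meson card_2_iff)
  obtain u where uv: "u \<noteq> v" "{u, v} \<in> E"
    using ab e by (metis insert_commute insert_iff singletonD)
  have uV: "u \<in> V" and vV: "v \<in> V" using EV[OF uv(2)] by auto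
  have finS: "finite S" unfolding S_def spins_def using finV by (intro finite_PiE) auto
  have wpos: "\<And>\<sigma>. w \<sigma> \<ge> 0" unfolding w_def using g by simp
  have flb: "?M (fl y \<sigma>) \<le> ?M \<sigma> + \<Delta>" if "y \<in> V" for y \<sigma>
    using fl_bound[OF finE, of y \<sigma>] deg[OF that] by simp
  have wt: "c * w \<sigma> \<le> w \<tau>" if "?M \<tau> \<le> ?M \<sigma> + 2 * \<Delta>" for \<sigma> \<tau>
  proof -
    have "g ^ (?M \<sigma> + 2 * \<Delta>) \<le> g ^ ?M \<tau>" using that g by (intro power_decreasing) auto
    thus ?thesis unfolding w_def c_def by (simp add: power_add mult.commute)
  qed
  define A where "A = {\<sigma>\<in>S. ?M \<sigma> = x}"
  define B1 where "B1 = {\<sigma>\<in>A. ?M (fl v \<sigma>) \<noteq> x}"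
  define B2 where "B2 = {\<sigma>\<in>A. ?M (fl u \<sigma>) \<noteq> x}"
  define B3 where "B3 = {\<sigma>\<in>A. ?M (fl u (fl v \<sigma>)) \<noteq> x}"
  have finA: "finite A" unfolding A_def using finS by simp
  have fB: "finite B1" "finite B2" "finite B3" unfolding B1_def B2_def B3_def using finA by auto
  have AB: "A \<subseteq> B1 \<union> B2 \<union> B3"
  proof
    fix \<sigma> assume s: "\<sigma> \<in> A"
    have "\<sigma> u \<in> {-1, 1}" "\<sigma> v \<in> {-1, 1}" using s uV vV unfolding A_def S_def spins_def by auto
    from second_diff[OF finE uv E2 this] have
      "real (?M (fl u (fl v \<sigma>))) + real (?M \<sigma>) - real (?M (fl u \<sigma>)) - real (?M (fl v \<sigma>)) \<noteq> 0" .
    thus "\<sigma> \<in> B1 \<union> B2 \<union> B3" using s unfolding B1_def B2_def B3_def A_def by auto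
  qed
  have SA: "S - A = {\<sigma>\<in>S. ?M \<sigma> \<noteq> x}" unfolding A_def by auto
  have sS: "\<sigma> \<in> S \<Longrightarrow> fl y \<sigma> \<in> S" if "y \<in> V" for y \<sigma> unfolding S_def using fl_spins that by blast
  have b1: "c * sum w B1 \<le> sum w (S - A)"
  proof (rule sum_inj_bound[OF _ fB(1)])
    show "inj_on (fl v) B1" by (rule inj_onI) (metis fl_fl)
    show "fl v ` B1 \<subseteq> S - A" unfolding B1_def A_def using sS[OF vV] by auto
    show "c * w \<sigma> \<le> w (fl v \<sigma>)" for \<sigma> using flb[OF vV, of \<sigma>] by (intro wt) simp
  qed (use finS wpos in auto)
  have b2: "c * sum w B2 \<le> sum w (S - A)"
  proof (rule sum_inj_bound[OF _ fB(2)])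
    show "inj_on (fl u) B2" by (rule inj_onI) (metis fl_fl)
    show "fl u ` B2 \<subseteq> S - A" unfolding B2_def A_def using sS[OF uV] by auto
    show "c * w \<sigma> \<le> w (fl u \<sigma>)" for \<sigma> using flb[OF uV, of \<sigma>] by (intro wt) simp
  qed (use finS wpos in auto)
  have b3: "c * sum w B3 \<le> sum w (S - A)"
  proof (rule sum_inj_bound[OF _ fB(3), of _ "\<lambda>\<sigma>. fl u (fl v \<sigma>)"])
    show "inj_on (\<lambda>\<sigma>. fl u (fl v \<sigma>)) B3"
    proof (rule inj_onI)
      fix x y assume "fl u (fl v x) = fl u (fl v y)"
      hence "fl v (fl u (fl u (fl v x))) = fl v (fl u (fl u (fl v y)))" by simp
      thus "x = y" by simp
    qed
    show "(\<lambda>\<sigma>. fl u (fl v \<sigma>)) ` B3 \<subseteq> S - A" unfolding B3_def A_def using sS[OF uV] sS[OF vV] by auto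
    show "c * w \<sigma> \<le> w (fl u (fl v \<sigma>))" for \<sigma>
      using flb[OF uV, of "fl v \<sigma>"] flb[OF vV, of \<sigma>] by (intro wt) simp
  qed (use finS wpos in auto)
  have "sum w A \<le> sum w (B1 \<union> B2 \<union> B3)" using AB fB wpos by (intro sum_mono2) auto
  also have "\<dots> \<le> sum w B1 + sum w B2 + sum w B3" using fB wpos by (intro sum_Un3_le) auto
  finally have "c * sum w A \<le> c * (sum w B1 + sum w B2 + sum w B3)"
    using g unfolding c_def by (intro mult_left_mono) auto
  also have "\<dots> \<le> 3 * sum w (S - A)" using b1 b2 b3 by (simp add: algebra_simps)
  finally have cA: "c * sum w A \<le> 3 * sum w (S - A)" .
  have cpos: "c > 0" unfolding c_def using g by simp
  have "sum w A \<le> 3 / c * sum w (S - A)" using cA cpos by (simp add: field_simps)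
  moreover have "sum w S = sum w (S - A) + sum w A"
    using sum.subset_diff[of A S w] finS unfolding A_def by auto
  ultimately have "sum w S \<le> (1 + 3 / c) * sum w (S - A)" by (simp add: algebra_simps)
  hence "sum w S \<le> (1 + 3 / c) * sum w {\<sigma>\<in>S. ?M \<sigma> \<noteq> x}" by (simp only: SA)
  thus ?thesis unfolding w_def c_def S_def .
qed


lemma gibbs_eta: "gibbs V E \<gamma> = (\<lambda>\<sigma>. \<gamma> ^ mono_edges E \<sigma> / ising_Z V E \<gamma>)"
  by (rule ext) (simp add: gibbs_def)

theorem lemma7p2:
  fixes \<alpha> \<Delta> :: nat and \<beta>\<nu> \<beta>\<mu> :: real
  assumes "\<alpha> \<ge> 2" and "\<Delta> \<ge> 3"
    and "\<beta>\<mu> > \<beta>\<nu>" and "\<beta>\<nu> \<ge> (real \<Delta> - 2) / real \<Delta>"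
    and "(\<beta>\<nu> / \<beta>\<mu>) ^ \<alpha> * \<beta>\<mu> < (real \<Delta> - 2) / real \<Delta>"
  shows "\<exists>C>0. \<forall>V E. regular_graph \<Delta> V E \<and> V \<noteq> {} \<longrightarrow>
           (let \<beta> = (\<beta>\<nu> / \<beta>\<mu>) ^ \<alpha> * \<beta>\<mu>;
                Q = chi_div \<alpha> (gibbs V E \<beta>\<nu>) (gibbs V E \<beta>\<mu>) (spins V)
                    * ising_Z V E \<beta>\<nu> ^ \<alpha> / ising_Z V E \<beta>\<mu> ^ (\<alpha> - 1)
            in ising_Z V E \<beta> / C \<le> Q \<and> Q \<le> C * ising_Z V E \<beta>)"
proof -
  define a where "a = \<beta>\<nu>"
  define b where "b = \<beta>\<mu>"
  define r where "r = a / b"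
  define g where "g = r ^ \<alpha> * b"
  define \<delta> where "\<delta> = (1 - r) / (1 + r)"
  define K where "K = 1 + 3 / g ^ (2 * \<Delta>)"
  define C where "C = max 1 (2 * K / \<delta> ^ \<alpha>)"
  have thr: "(real \<Delta> - 2) / real \<Delta> > 0" "(real \<Delta> - 2) / real \<Delta> < 1" using assms(2) by auto
  have apos: "a > 0" unfolding a_def using assms(4) thr by linarith
  have bpos: "b > 0" unfolding b_def using assms(3) apos a_def by linarith
  have r01: "0 < r" "r < 1" unfolding r_def using apos bpos assms(3) a_def b_def by auto
  have gpos: "g > 0" unfolding g_def using r01 bpos by simp
  have g1: "g < 1" unfolding g_def r_def a_def b_def using assms(5) thr by linarith
  have dpos: "\<delta> > 0" unfolding \<delta>_def using r01 by simp
  have Kpos: "K > 0" unfolding K_def using gpos by (simp add: add_pos_nonneg)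
  have C1: "C \<ge> 1" and C2: "C \<ge> 2 * K / \<delta> ^ \<alpha>" unfolding C_def by auto
  have Cpos: "C > 0" using C1 by simp
  show ?thesis
  proof (intro exI[of _ C] conjI allI impI Cpos)
    fix V E assume VE: "regular_graph \<Delta> V E \<and> V \<noteq> {}"
    let ?M = "mono_edges E"
    define S where "S = spins V"
    have finV: "finite V" using VE unfolding regular_graph_def simple_graph_def by auto
    have finS: "finite S" unfolding S_def spins_def using finV by (intro finite_PiE) auto
    have "restrict (\<lambda>_. 1) V \<in> S" unfolding S_def spins_def by auto
    hence neS: "S \<noteq> {}" by auto
    define Za where "Za = (\<Sum>\<sigma>\<in>S. a ^ ?M \<sigma>)"
    define Zb where "Zb = (\<Sum>\<sigma>\<in>S. b ^ ?M \<sigma>)"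
    define Zg where "Zg = (\<Sum>\<sigma>\<in>S. g ^ ?M \<sigma>)"
    have Zapos: "Za > 0" unfolding Za_def using finS neS apos by (intro sum_pos) auto
    have Zbpos: "Zb > 0" unfolding Zb_def using finS neS bpos by (intro sum_pos) auto
    have Zgnn: "Zg \<ge> 0" unfolding Zg_def using gpos by (intro sum_nonneg) simp
    define Q where "Q = chi_div \<alpha> (gibbs V E \<beta>\<nu>) (gibbs V E \<beta>\<mu>) (spins V)
                    * ising_Z V E \<beta>\<nu> ^ \<alpha> / ising_Z V E \<beta>\<mu> ^ (\<alpha> - 1)"
    have Qeq: "Q = (1/2) * (\<Sum>\<sigma>\<in>S. b ^ ?M \<sigma> * \<bar>(a/b) ^ ?M \<sigma> - Za/Zb\<bar> ^ \<alpha>)"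
    proof -
      have "Q = chi_div \<alpha> (\<lambda>\<sigma>. a ^ ?M \<sigma> / Za) (\<lambda>\<sigma>. b ^ ?M \<sigma> / Zb) S * Za ^ \<alpha> / Zb ^ (\<alpha> - 1)"
        unfolding Q_def gibbs_eta ising_Z_def Za_def Zb_def S_def a_def b_def ..
      also have "\<dots> = (1/2) * (\<Sum>\<sigma>\<in>S. b ^ ?M \<sigma> * \<bar>(a/b) ^ ?M \<sigma> - Za/Zb\<bar> ^ \<alpha>)"
        using assms(1) by (intro Q_eq[OF apos bpos _ Za_def Zb_def Zapos Zbpos]) simp
      finally show ?thesis .
    qed
    have Zg_eq: "ising_Z V E ((\<beta>\<nu> / \<beta>\<mu>) ^ \<alpha> * \<beta>\<mu>) = Zg"
      unfolding Zg_def ising_Z_def S_def g_def r_def a_def b_def ..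
    have up: "Q \<le> Zg"
      unfolding Qeq Zg_def g_def r_def using upper[OF finS neS apos bpos Za_def Zb_def] .
    obtain x where x: "\<And>n. n \<noteq> x \<Longrightarrow> \<delta> * r ^ n \<le> \<bar>r ^ n - Za/Zb\<bar>"
      using select[OF r01, of "Za/Zb"] unfolding \<delta>_def by blast
    have lo1: "\<delta> ^ \<alpha> * (\<Sum>\<sigma>\<in>{\<sigma>\<in>S. ?M \<sigma> \<noteq> x}. g ^ ?M \<sigma>) \<le> 2 * Q"
      unfolding Qeq g_def r_def
      using lower[OF bpos _ _ finS, of \<delta> a ?M x "Za/Zb" \<alpha>] x dpos apos unfolding r_def by simp
    have lo2: "Zg \<le> K * (\<Sum>\<sigma>\<in>{\<sigma>\<in>S. ?M \<sigma> \<noteq> x}. g ^ ?M \<sigma>)"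
      unfolding Zg_def K_def S_def using comb[of \<Delta> V E g x] VE assms(2) gpos g1 by simp
    define T where "T = (\<Sum>\<sigma>\<in>{\<sigma>\<in>S. ?M \<sigma> \<noteq> x}. g ^ ?M \<sigma>)"
    have "Zg * \<delta> ^ \<alpha> \<le> (K * T) * \<delta> ^ \<alpha>"
      using lo2 dpos unfolding T_def by (intro mult_right_mono) auto
    also have "\<dots> = K * (\<delta> ^ \<alpha> * T)" by simp
    also have "\<dots> \<le> K * (2 * Q)" using lo1 Kpos unfolding T_def by (intro mult_left_mono) auto
    finally have "Zg * \<delta> ^ \<alpha> \<le> K * (2 * Q)" .
    hence lo: "Zg * \<delta> ^ \<alpha> / (2 * K) \<le> Q" using Kpos by (simp add: field_simps)
    have "Zg / C \<le> Zg / (2 * K / \<delta> ^ \<alpha>)"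
    proof (rule divide_left_mono[OF C2 Zgnn])
      have "2 * K / \<delta> ^ \<alpha> > 0" using Kpos dpos by simp
      thus "0 < C * (2 * K / \<delta> ^ \<alpha>)" using Cpos by (rule mult_pos_pos[rotated])
    qed
    also have "\<dots> = Zg * \<delta> ^ \<alpha> / (2 * K)" using dpos by simp
    finally have "Zg / C \<le> Q" using lo by linarith
    moreover have "Q \<le> C * Zg" 
    proof -
      have "1 * Zg \<le> C * Zg" by (rule mult_right_mono[OF C1 Zgnn])
      thus ?thesis using up by simp
    qed
    ultimately show "let \<beta> = (\<beta>\<nu> / \<beta>\<mu>) ^ \<alpha> * \<beta>\<mu>;
                Q = chi_div \<alpha> (gibbs V E \<beta>\<nu>) (gibbs V E \<beta>\<mu>) (spins V)
                    * ising_Z V E \<beta>\<nu> ^ \<alpha> / ising_Z V E \<beta>\<mu> ^ (\<alpha> - 1)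
            in ising_Z V E \<beta> / C \<le> Q \<and> Q \<le> C * ising_Z V E \<beta>"
      unfolding Let_def Zg_eq Q_def[symmetric] by simp
  qed
qed

end
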